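(* Let $X$ be a compact Hausdorff space, $\mathcal C=C(X)$ the real continuous functions on $X$ with the supremum norm, $\alpha\colon X\to X$ continuous, $\delta f=f\circ\alpha$, and $A\colon\mathcal C\to\mathcal C$ a transfer operator for $(\mathcal C,\delta)$. Let $\lambda(\varphi)=\lim_{n\to\infty}\frac1n\ln\|A_\varphi^n\mathbf 1\|$ where $A_\varphi f=A(e^\varphi f)$. Then for every linear functional $\mu$ on $\mathcal C$ that does not belong to $M_\delta(\mathcal C)$, \[ \inf_{\varphi\in\mathcal C}\bigl(\lambda(\varphi)-\mu[\varphi]\bigr)=-\infty. \]
   Context: A transfer operator for $(\mathcal C,\delta)$ is a positive linear operator $A\colon\mathcal C\to\mathcal C$ with $A((\delta f)g)=f\,Ag$ for all $f,g\in\mathcal C$. $\mathbf 1$ is the constant function $1$. $M_\delta(\mathcal C)$ is the set of positive linear functionals $\mu$ on $\mathcal C$ with $\mu[\mathbf 1]=1$ and $\mu[\delta f]=\mu[f]$ for all $f\in\mathcal C$. *)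

theory Defs
  imports "HOL-Analysis.Analysis"
begin

text \<open>The space C(X) of real continuous functions on the (compact Hausdorff) space X,
  where X is the universe of the type 'a.\<close>
definition cfun :: "('a::topological_space \<Rightarrow> real) set" where
  "cfun = {f. continuous_on UNIV f}"

definition supnorm :: "('a \<Rightarrow> real) \<Rightarrow> real" where
  "supnorm f = (SUP x. \<bar>f x\<bar>)"

definition one_fun :: "'a \<Rightarrow> real" where
  "one_fun = (\<lambda>x. 1)"

definition pos_linear_op :: "(('a::topological_space \<Rightarrow> real) \<Rightarrow> ('a \<Rightarrow> real)) \<Rightarrow> bool" where
  "pos_linear_op A \<longleftrightarrow>
     (\<forall>f\<in>cfun. A f \<in> cfun) \<and>
     (\<forall>f\<in>cfun. \<forall>g\<in>cfun. A (\<lambda>x. f x + g x) = (\<lambda>x. A f x + A g x)) \<and>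
     (\<forall>f\<in>cfun. \<forall>c::real. A (\<lambda>x. c * f x) = (\<lambda>x. c * A f x)) \<and>
     (\<forall>f\<in>cfun. (\<forall>x. f x \<ge> 0) \<longrightarrow> (\<forall>x. A f x \<ge> 0))"

definition transfer_operator :: "('a::topological_space \<Rightarrow> 'a) \<Rightarrow> (('a \<Rightarrow> real) \<Rightarrow> ('a \<Rightarrow> real)) \<Rightarrow> bool" where
  "transfer_operator \<alpha> A \<longleftrightarrow> pos_linear_op A \<and>
     (\<forall>f\<in>cfun. \<forall>g\<in>cfun. A (\<lambda>x. f (\<alpha> x) * g x) = (\<lambda>x. f x * A g x))"

definition linear_functional :: "(('a::topological_space \<Rightarrow> real) \<Rightarrow> real) \<Rightarrow> bool" where
  "linear_functional \<mu> \<longleftrightarrow>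
     (\<forall>f\<in>cfun. \<forall>g\<in>cfun. \<mu> (\<lambda>x. f x + g x) = \<mu> f + \<mu> g) \<and>
     (\<forall>f\<in>cfun. \<forall>c::real. \<mu> (\<lambda>x. c * f x) = c * \<mu> f)"

definition M_delta :: "('a::topological_space \<Rightarrow> 'a) \<Rightarrow> (('a \<Rightarrow> real) \<Rightarrow> real) set" where
  "M_delta \<alpha> = {\<mu>. linear_functional \<mu> \<and>
      (\<forall>f\<in>cfun. (\<forall>x. f x \<ge> 0) \<longrightarrow> \<mu> f \<ge> 0) \<and>
      \<mu> one_fun = 1 \<and>
      (\<forall>f\<in>cfun. \<mu> (\<lambda>x. f (\<alpha> x)) = \<mu> f)}"

definition weighted_op :: "(('a \<Rightarrow> real) \<Rightarrow> ('a \<Rightarrow> real)) \<Rightarrow> ('a \<Rightarrow> real) \<Rightarrow> ('a \<Rightarrow> real) \<Rightarrow> ('a \<Rightarrow> real)" where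
  "weighted_op A \<phi> f = A (\<lambda>x. exp (\<phi> x) * f x)"

definition eln :: "real \<Rightarrow> ereal" where
  "eln t = (if t \<le> 0 then -\<infinity> else ereal (ln t))"

definition spec_exp :: "(('a \<Rightarrow> real) \<Rightarrow> ('a \<Rightarrow> real)) \<Rightarrow> ('a \<Rightarrow> real) \<Rightarrow> ereal" where
  "spec_exp A \<phi> = lim (\<lambda>n. eln (supnorm ((weighted_op A \<phi> ^^ n) one_fun)) / ereal (real n))"

end

theory Submission
  imports Defs
begin


lemma fekete:
  fixes b :: "nat \<Rightarrow> real"
  assumes sub: "\<And>m n. b (m+n) \<le> b m + b n"
  shows "(\<lambda>n. ereal (b n / real n)) \<longlonglongrightarrow> (INF n\<in>{1..}. ereal (b n / real n))"
proof (rule order_tendsto_iff[THEN iffD2], intro conjI allI impI)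
  let ?L = "INF n\<in>{1..}. ereal (b n / real n)"
  fix a assume "a < ?L"
  show "\<forall>\<^sub>F n in sequentially. a < ereal (b n / real n)"
    unfolding eventually_sequentially
  proof (intro exI[of _ 1] allI impI)
    fix n :: nat assume "n \<ge> 1"
    then have "?L \<le> ereal (b n / real n)" by (intro INF_lower) auto
    then show "a < ereal (b n / real n)" using \<open>a < ?L\<close> by simp
  qed
next
  let ?L = "INF n\<in>{1..}. ereal (b n / real n)"
  fix a assume "?L < a"
  then obtain m where m: "m \<ge> 1" "ereal (b m / real m) < a"
    by (auto simp: INF_less_iff)
  show "\<forall>\<^sub>F n in sequentially. ereal (b n / real n) < a"
  proof (cases a)
    case PInf then show ?thesis by simp
  next
    case MInf then show ?thesis using m by simp
  next
    case (real a')
    define x where "x = b m / real m"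
    have xa: "x < a'" using m real x_def by simp
    define C where "C = (\<Sum>r<m. \<bar>b r\<bar>)"
    have Cb: "b r \<le> C" if "r < m" for r
    proof -
      have "\<bar>b r\<bar> \<le> C" unfolding C_def
        by (rule member_le_sum[where f="\<lambda>r. \<bar>b r\<bar>"]) (use that in auto)
      then show ?thesis by simp
    qed
    have ind: "b (q*m + r) \<le> real q * b m + b r" for q r
    proof (induction q)
      case 0 then show ?case by simp
    next
      case (Suc q)
      have "b (Suc q * m + r) = b (m + (q*m + r))" by (simp add: algebra_simps)
      also have "\<dots> \<le> b m + b (q*m+r)" by (rule sub)
      also have "\<dots> \<le> b m + (real q * b m + b r)" using Suc by simp
      finally show ?case by (simp add: algebra_simps)
    qed
    have bn: "b n \<le> real n * x + real m * \<bar>x\<bar> + C" for n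
    proof -
      define q where "q = n div m"
      define r where "r = n mod m"
      have n: "n = q*m + r" unfolding q_def r_def by simp
      have rm: "r < m" unfolding r_def using m by simp
      have "b n \<le> real q * b m + b r" using ind n by simp
      also have "real q * b m = real (q*m) * x" using m unfolding x_def by simp
      also have "real (q*m) * x \<le> real n * x + real m * \<bar>x\<bar>"
      proof -
        have "\<bar>real (q*m) - real n\<bar> \<le> real m" using n rm by simp
        then have "(real (q*m) - real n) * x \<le> real m * \<bar>x\<bar>"
          by (metis abs_ge_self abs_mult abs_of_nat mult_right_mono abs_ge_zero order_trans)
        then show ?thesis by (simp add: algebra_simps)
      qed
      finally show ?thesis using Cb[OF rm] by simp
    qed
    define D where "D = real m * \<bar>x\<bar> + C"
    define N where "N = nat (ceiling (D / (a' - x))) + 1"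
    show ?thesis unfolding eventually_sequentially
    proof (intro exI[of _ N] allI impI)
      fix n assume "n \<ge> N"
      then have npos: "real n > 0" "real n > D / (a' - x)" unfolding N_def by linarith+
      then have "D < real n * (a' - x)" using xa by (simp add: field_simps)
      then have "b n < real n * a'" using bn[of n] unfolding D_def by (simp add: algebra_simps)
      then have "b n / real n < a'" using npos by (simp add: field_simps)
      then show "ereal (b n / real n) < a" using real by simp
    qed
  qed
qed



lemma cfun_iff: "f \<in> cfun \<longleftrightarrow> continuous_on UNIV f" by (simp add: cfun_def)

lemma cfun_bdd:
  assumes "compact (UNIV::'a::topological_space set)" "(f::'a\<Rightarrow>real) \<in> cfun"
  shows "bdd_above (range (\<lambda>x. \<bar>f x\<bar>))"
proof -
  have "compact (range f)" using assms compact_continuous_image by (auto simp: cfun_iff)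
  then have "bounded (range f)" by (rule compact_imp_bounded)
  then obtain B where "\<forall>y\<in>range f. norm y \<le> B" by (auto simp: bounded_iff)
  then show ?thesis by (auto simp: bdd_above_def)
qed

lemma supnorm_ge:
  assumes "compact (UNIV::'a::topological_space set)" "(f::'a\<Rightarrow>real) \<in> cfun"
  shows "\<bar>f x\<bar> \<le> supnorm f"
  unfolding supnorm_def by (rule cSUP_upper[OF _ cfun_bdd[OF assms]]) auto

lemma supnorm_le:
  assumes "\<And>x. \<bar>f x\<bar> \<le> c"
  shows "supnorm f \<le> c"
  unfolding supnorm_def by (rule cSUP_least) (use assms in auto)

lemma supnorm_nonneg:
  assumes "compact (UNIV::'a::topological_space set)" "(f::'a\<Rightarrow>real) \<in> cfun"
  shows "0 \<le> supnorm f"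
  using supnorm_ge[OF assms, of undefined] by linarith

lemma one_cfun: "one_fun \<in> cfun" by (simp add: cfun_iff one_fun_def)

lemma plo_cfun: "pos_linear_op B \<Longrightarrow> f \<in> cfun \<Longrightarrow> B f \<in> cfun"
  by (simp add: pos_linear_op_def)
lemma plo_add: "pos_linear_op B \<Longrightarrow> f \<in> cfun \<Longrightarrow> g \<in> cfun \<Longrightarrow> B (\<lambda>x. f x + g x) = (\<lambda>x. B f x + B g x)"
  by (simp add: pos_linear_op_def)
lemma plo_scale: "pos_linear_op B \<Longrightarrow> f \<in> cfun \<Longrightarrow> B (\<lambda>x. c * f x) = (\<lambda>x. c * B f x)"
  by (simp add: pos_linear_op_def)
lemma plo_pos: "pos_linear_op B \<Longrightarrow> f \<in> cfun \<Longrightarrow> (\<And>x. f x \<ge> 0) \<Longrightarrow> B f x \<ge> 0"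
  by (simp add: pos_linear_op_def)

lemma plo_mono:
  assumes B: "pos_linear_op B" and f: "f \<in> cfun" and g: "g \<in> cfun" and le: "\<And>x. f x \<le> g x"
  shows "B f x \<le> B g x"
proof -
  have d: "(\<lambda>x. g x - f x) \<in> cfun" using f g by (auto simp: cfun_iff intro!: continuous_intros)
  have "B g = B (\<lambda>x. f x + (g x - f x))" by simp
  also have "\<dots> = (\<lambda>x. B f x + B (\<lambda>x. g x - f x) x)" by (rule plo_add[OF B f d])
  finally have "B g x = B f x + B (\<lambda>x. g x - f x) x" by simp
  moreover have "B (\<lambda>x. g x - f x) x \<ge> 0" by (rule plo_pos[OF B d]) (use le in auto)
  ultimately show ?thesis by simp
qed

lemma plo_pow:
  fixes B :: "('a::topological_space \<Rightarrow> real) \<Rightarrow> ('a \<Rightarrow> real)"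
  shows "pos_linear_op B \<Longrightarrow> pos_linear_op (B ^^ n)"
proof (induction n)
  case 0 then show ?case by (simp add: pos_linear_op_def)
next
  case (Suc n)
  have IH: "pos_linear_op (B ^^ n)" using Suc by simp
  show ?case unfolding pos_linear_op_def funpow.simps o_def
  proof (intro conjI ballI allI impI)
    fix f :: "'a \<Rightarrow> real" assume "f \<in> cfun" then show "B ((B^^n) f) \<in> cfun"
      using Suc.prems IH by (simp add: plo_cfun)
  next
    fix f g :: "'a \<Rightarrow> real" assume "f \<in> cfun" "g \<in> cfun" then show "B ((B^^n) (\<lambda>x. f x + g x)) = (\<lambda>x. B ((B^^n) f) x + B ((B^^n) g) x)"
      using Suc.prems IH by (simp add: plo_cfun plo_add)
  next
    fix f :: "'a \<Rightarrow> real" and c :: real assume "f \<in> cfun" then show "B ((B^^n) (\<lambda>x. c * f x)) = (\<lambda>x. c * B ((B^^n) f) x)"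
      using Suc.prems IH by (simp add: plo_cfun plo_scale)
  next
    fix f :: "'a \<Rightarrow> real" and x assume "f \<in> cfun" "\<forall>x. 0 \<le> f x" then show "0 \<le> B ((B^^n) f) x"
      using Suc.prems IH by (simp add: plo_cfun plo_pos)
  qed
qed

lemma weighted_plo:
  fixes A :: "('a::topological_space \<Rightarrow> real) \<Rightarrow> ('a \<Rightarrow> real)"
  assumes "pos_linear_op A" "\<phi> \<in> cfun"
  shows "pos_linear_op (weighted_op A \<phi>)"
proof -
  have c: "(\<lambda>x. exp (\<phi> x) * f x) \<in> cfun" if "f \<in> cfun" for f
    using that assms(2) by (auto simp: cfun_iff intro!: continuous_intros)
  show ?thesis unfolding pos_linear_op_def weighted_op_def
  proof (intro conjI ballI allI impI)
    fix f :: "'a \<Rightarrow> real" assume "f \<in> cfun" then show "A (\<lambda>x. exp (\<phi> x) * f x) \<in> cfun"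
      using assms c by (simp add: plo_cfun)
  next
    fix f g :: "'a \<Rightarrow> real" assume f: "f \<in> cfun" and g: "g \<in> cfun"
    have "A (\<lambda>x. exp (\<phi> x) * (f x + g x)) = A (\<lambda>x. exp (\<phi> x) * f x + exp (\<phi> x) * g x)"
      by (simp add: algebra_simps)
    also have "\<dots> = (\<lambda>x. A (\<lambda>x. exp (\<phi> x) * f x) x + A (\<lambda>x. exp (\<phi> x) * g x) x)"
      by (rule plo_add[OF assms(1) c[OF f] c[OF g]])
    finally show "A (\<lambda>x. exp (\<phi> x) * (f x + g x)) = (\<lambda>x. A (\<lambda>x. exp (\<phi> x) * f x) x + A (\<lambda>x. exp (\<phi> x) * g x) x)" .
  next
    fix f :: "'a \<Rightarrow> real" and c0 :: real assume f: "f \<in> cfun"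
    have "A (\<lambda>x. exp (\<phi> x) * (c0 * f x)) = A (\<lambda>x. c0 * (exp (\<phi> x) * f x))"
      by (simp add: algebra_simps)
    also have "\<dots> = (\<lambda>x. c0 * A (\<lambda>x. exp (\<phi> x) * f x) x)"
      by (rule plo_scale[OF assms(1) c[OF f]])
    finally show "A (\<lambda>x. exp (\<phi> x) * (c0 * f x)) = (\<lambda>x. c0 * A (\<lambda>x. exp (\<phi> x) * f x) x)" .
  next
    fix f :: "'a \<Rightarrow> real" and x assume f: "f \<in> cfun" and fp: "\<forall>x. 0 \<le> f x"
    show "0 \<le> A (\<lambda>x. exp (\<phi> x) * f x) x"
      by (rule plo_pos[OF assms(1) c[OF f]]) (use fp in simp)
  qed
qed

lemma pow_cfun: "pos_linear_op B \<Longrightarrow> (B ^^ n) one_fun \<in> cfun"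
  using plo_pow plo_cfun one_cfun by blast

lemma pow_nonneg: "pos_linear_op B \<Longrightarrow> (B ^^ n) one_fun x \<ge> 0"
  by (rule plo_pos[OF plo_pow one_cfun]) (auto simp: one_fun_def)

lemma submult:
  assumes K: "compact (UNIV::'a::topological_space set)" and B: "pos_linear_op (B :: ('a \<Rightarrow> real) \<Rightarrow> _)"
  shows "supnorm ((B^^(m+n)) one_fun) \<le> supnorm ((B^^m) one_fun) * supnorm ((B^^n) one_fun)"
proof (rule supnorm_le)
  fix x
  let ?h = "(B^^n) one_fun"
  let ?c = "supnorm ?h"
  have h: "?h \<in> cfun" by (rule pow_cfun[OF B])
  have Bm: "pos_linear_op (B^^m)" by (rule plo_pow[OF B])
  have "(B^^(m+n)) one_fun x = (B^^m) ?h x" by (simp add: funpow_add)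
  also have "\<dots> \<le> (B^^m) (\<lambda>x. ?c * one_fun x) x"
  proof (rule plo_mono[OF Bm h])
    show "(\<lambda>x. ?c * one_fun x) \<in> cfun" by (simp add: cfun_iff one_fun_def)
    fix y show "?h y \<le> ?c * one_fun y" using supnorm_ge[OF K h, of y] by (simp add: one_fun_def)
  qed
  also have "\<dots> = ?c * (B^^m) one_fun x" by (simp add: plo_scale[OF Bm one_cfun])
  also have "\<dots> \<le> ?c * supnorm ((B^^m) one_fun)"
    using supnorm_ge[OF K pow_cfun[OF B], of m x] supnorm_nonneg[OF K h] pow_nonneg[OF B, of m x]
    by (intro mult_left_mono) auto
  finally show "\<bar>(B^^(m+n)) one_fun x\<bar> \<le> supnorm ((B^^m) one_fun) * supnorm ((B^^n) one_fun)"
    using pow_nonneg[OF B, of "m+n" x] by (simp add: mult.commute)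
qed



lemma lim_bound:
  fixes B :: "('a::topological_space \<Rightarrow> real) \<Rightarrow> ('a \<Rightarrow> real)"
  assumes K: "compact (UNIV::'a set)" and B: "pos_linear_op B"
    and n: "n \<ge> 1" and ab: "supnorm ((B^^n) one_fun) \<le> b" and b: "b > 0"
  shows "lim (\<lambda>n. eln (supnorm ((B ^^ n) one_fun)) / ereal (real n)) \<le> ereal (ln b / real n)"
proof -
  define a where "a k = supnorm ((B^^k) one_fun)" for k
  have a0: "a k \<ge> 0" for k unfolding a_def by (rule supnorm_nonneg[OF K pow_cfun[OF B]])
  have sm: "a (m+k) \<le> a m * a k" for m k unfolding a_def by (rule submult[OF K B])
  show ?thesis
  proof (cases "\<forall>k. a k > 0")
    case True
    define \<beta> where "\<beta> k = ln (a k)" for k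
    have sub: "\<beta> (m+k) \<le> \<beta> m + \<beta> k" for m k
    proof -
      have "ln (a (m+k)) \<le> ln (a m * a k)" using sm True by (simp add: ln_le_cancel_iff)
      then show ?thesis unfolding \<beta>_def using True by (simp add: ln_mult less_le)
    qed
    define L where "L = (INF k\<in>{1..}. ereal (\<beta> k / real k))"
    have conv: "(\<lambda>k. ereal (\<beta> k / real k)) \<longlonglongrightarrow> L" unfolding L_def by (rule fekete[OF sub])
    have ev: "\<forall>\<^sub>F k in sequentially. eln (a k) / ereal (real k) = ereal (\<beta> k / real k)"
      unfolding eventually_sequentially
      by (intro exI[of _ 1] allI impI) (use True in \<open>auto simp: eln_def \<beta>_def ereal_divide not_le\<close>)
    have "(\<lambda>k. eln (a k) / ereal (real k)) \<longlonglongrightarrow> L"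
      using conv tendsto_cong[OF ev] by simp
    then have "lim (\<lambda>k. eln (a k) / ereal (real k)) = L" by (rule limI)
    also have "L \<le> ereal (\<beta> n / real n)" unfolding L_def using n by (intro INF_lower) auto
    also have "\<beta> n / real n \<le> ln b / real n"
    proof -
      have "ln (a n) \<le> ln b" using True ab b unfolding a_def by (subst ln_le_cancel_iff) auto
      then show ?thesis unfolding \<beta>_def by (intro divide_right_mono) auto
    qed
    finally show ?thesis unfolding a_def by simp
  next
    case False
    then obtain k where k: "a k = 0" using a0 by (metis less_eq_real_def)
    have z: "a j = 0" if "j \<ge> k" for j
    proof -
      have "a j = a ((j-k)+k)" using that by simp
      also have "\<dots> \<le> a (j-k) * a k" by (rule sm)
      finally show ?thesis using k a0[of j] by simp
    qed
    have ev: "\<forall>\<^sub>F j in sequentially. eln (a j) / ereal (real j) = -\<infinity>"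
      unfolding eventually_sequentially
      by (intro exI[of _ "k+1"] allI impI) (auto simp: z eln_def)
    have "(\<lambda>j. eln (a j) / ereal (real j)) \<longlonglongrightarrow> -\<infinity>"
      using tendsto_cong[OF ev] by simp
    then have "lim (\<lambda>j. eln (a j) / ereal (real j)) = -\<infinity>" by (rule limI)
    then show ?thesis unfolding a_def by simp
  qed
qed



lemma ereal_diff_lt: "x \<le> ereal s \<Longrightarrow> s - m < r \<Longrightarrow> x - ereal m < ereal r"
  by (cases x) auto

lemma lf_add: "linear_functional \<mu> \<Longrightarrow> f \<in> cfun \<Longrightarrow> g \<in> cfun \<Longrightarrow> \<mu> (\<lambda>x. f x + g x) = \<mu> f + \<mu> g"
  by (simp add: linear_functional_def)
lemma lf_scale: "linear_functional \<mu> \<Longrightarrow> f \<in> cfun \<Longrightarrow> \<mu> (\<lambda>x. c * f x) = c * \<mu> f"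
  by (simp add: linear_functional_def)

lemma A_pow_bound:
  fixes A :: "('a::topological_space \<Rightarrow> real) \<Rightarrow> ('a \<Rightarrow> real)"
  assumes K: "compact (UNIV::'a set)" and B: "pos_linear_op A"
  shows "supnorm ((A^^n) one_fun) \<le> supnorm (A one_fun) ^ n"
proof (induction n)
  case 0
  show ?case by (rule supnorm_le) (simp add: one_fun_def)
next
  case (Suc n)
  have "supnorm ((A^^(1+n)) one_fun) \<le> supnorm ((A^^1) one_fun) * supnorm ((A^^n) one_fun)"
    by (rule submult[OF K B])
  also have "\<dots> \<le> supnorm (A one_fun) * supnorm (A one_fun) ^ n"
    using Suc supnorm_nonneg[OF K pow_cfun[OF B, of 1]] by (simp add: mult_left_mono)
  finally show ?case by simp
qed

theorem theorem1p10:
  fixes \<alpha> :: "'a::t2_space \<Rightarrow> 'a"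
    and A :: "('a \<Rightarrow> real) \<Rightarrow> ('a \<Rightarrow> real)"
    and \<mu> :: "('a \<Rightarrow> real) \<Rightarrow> real"
  assumes "compact (UNIV :: 'a set)"
    and "continuous_on UNIV \<alpha>"
    and "transfer_operator \<alpha> A"
    and "linear_functional \<mu>"
    and "\<mu> \<notin> M_delta \<alpha>"
  shows "(INF \<phi>\<in>cfun. spec_exp A \<phi> - ereal (\<mu> \<phi>)) = -\<infinity>"
proof -
  note K = assms(1)
  have Apl: "pos_linear_op A" using assms(3) by (simp add: transfer_operator_def)
  have tr: "\<And>f g. f \<in> cfun \<Longrightarrow> g \<in> cfun \<Longrightarrow> A (\<lambda>x. f (\<alpha> x) * g x) = (\<lambda>x. f x * A g x)"
    using assms(3) by (simp add: transfer_operator_def)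
  note lf = assms(4)
  define K1 where "K1 = supnorm (A one_fun)"
  have K1: "K1 \<ge> 0" unfolding K1_def by (rule supnorm_nonneg[OF K plo_cfun[OF Apl one_cfun]])
  define K' where "K' = K1 + 1"
  have K': "K' > 0" "K1 \<le> K'" using K1 by (auto simp: K'_def)
  have A1: "\<bar>A one_fun x\<bar> \<le> K1" for x unfolding K1_def by (rule supnorm_ge[OF K plo_cfun[OF Apl one_cfun]])
  have specb: "spec_exp A \<phi> \<le> ereal (ln b / real n)"
    if "\<phi> \<in> cfun" "n \<ge> 1" "supnorm ((weighted_op A \<phi> ^^ n) one_fun) \<le> b" "b > 0" for \<phi> n b
    unfolding spec_exp_def by (rule lim_bound[OF K weighted_plo[OF Apl that(1)] that(2-4)])
  have main: "\<exists>\<phi>\<in>cfun. spec_exp A \<phi> - ereal (\<mu> \<phi>) < ereal r" for r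
  proof -
    have "\<not> (\<forall>f\<in>cfun. (\<forall>x. f x \<ge> 0) \<longrightarrow> \<mu> f \<ge> 0) \<or> \<mu> one_fun \<noteq> 1 \<or> \<not> (\<forall>f\<in>cfun. \<mu> (\<lambda>x. f (\<alpha> x)) = \<mu> f)"
      using assms(5) lf unfolding M_delta_def by auto
    then consider (neg) f where "f \<in> cfun" "\<forall>x. f x \<ge> 0" "\<mu> f < 0"
      | (one) "\<mu> one_fun \<noteq> 1"
      | (inv) f where "f \<in> cfun" "\<mu> (\<lambda>x. f (\<alpha> x)) \<noteq> \<mu> f"
      by (auto simp: not_le)
    then show ?thesis
    proof cases
      case neg
      define t where "t = \<bar>ln K' - r\<bar> / (- \<mu> f) + 1"
      have tpos: "t > 0" using neg(3) unfolding t_def by (simp add: divide_nonneg_pos add_nonneg_pos)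
      define \<phi> where "\<phi> = (\<lambda>x. (-t) * f x)"
      have \<phi>c: "\<phi> \<in> cfun" using neg(1) unfolding \<phi>_def by (auto simp: cfun_iff intro!: continuous_intros)
      have ec: "(\<lambda>x. exp (\<phi> x) * one_fun x) \<in> cfun" using \<phi>c by (auto simp: cfun_iff one_fun_def intro!: continuous_intros)
      have "supnorm ((weighted_op A \<phi> ^^ 1) one_fun) \<le> K'"
      proof (rule supnorm_le)
        fix x
        have le: "A (\<lambda>x. exp (\<phi> x) * one_fun x) x \<le> A one_fun x"
          by (rule plo_mono[OF Apl ec one_cfun]) (use neg(2) tpos in \<open>auto simp: one_fun_def \<phi>_def\<close>)
        have ge: "A (\<lambda>x. exp (\<phi> x) * one_fun x) x \<ge> 0"
          by (rule plo_pos[OF Apl ec]) (simp add: one_fun_def)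
        show "\<bar>(weighted_op A \<phi> ^^ 1) one_fun x\<bar> \<le> K'"
          using le ge A1[of x] K' by (simp add: weighted_op_def)
      qed
      note sn = this
      have sb: "spec_exp A \<phi> \<le> ereal (ln K' / real (1::nat))" by (rule specb[OF \<phi>c _ sn K'(1)]) simp
      have mu: "\<mu> \<phi> = - t * \<mu> f" unfolding \<phi>_def by (rule lf_scale[OF lf neg(1)])
      have "ln K' / real (1::nat) - \<mu> \<phi> < r"
      proof -
        have "t * \<mu> f = - \<bar>ln K' - r\<bar> + \<mu> f" using neg(3) unfolding t_def by (simp add: field_simps)
        moreover have "ln K' - r \<le> \<bar>ln K' - r\<bar>" by (rule abs_ge_self)
        ultimately show ?thesis unfolding mu using neg(3) by (simp add: algebra_simps)
      qed
      then show ?thesis using \<phi>c ereal_diff_lt[OF sb] by blast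
    next
      case one
      define c where "c = (r - ln K' - 1) / (1 - \<mu> one_fun)"
      define \<phi> :: "'a \<Rightarrow> real" where "\<phi> = (\<lambda>x. c * one_fun x)"
      have \<phi>c: "\<phi> \<in> cfun" unfolding \<phi>_def by (auto simp: cfun_iff one_fun_def)
      have W: "(weighted_op A \<phi> ^^ 1) one_fun = (\<lambda>x. exp c * A one_fun x)"
      proof -
        have "(weighted_op A \<phi> ^^ 1) one_fun = A (\<lambda>x. exp c * one_fun x)"
          by (simp add: weighted_op_def \<phi>_def one_fun_def)
        also have "\<dots> = (\<lambda>x. exp c * A one_fun x)" by (rule plo_scale[OF Apl one_cfun])
        finally show ?thesis .
      qed
      have "supnorm ((weighted_op A \<phi> ^^ 1) one_fun) \<le> exp c * K'"
        unfolding W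
      proof (rule supnorm_le)
        fix x show "\<bar>exp c * A one_fun x\<bar> \<le> exp c * K'"
          using A1[of x] K' by (simp add: abs_mult)
      qed
      note sn = this
      have sb: "spec_exp A \<phi> \<le> ereal (ln (exp c * K') / real (1::nat))"
        by (rule specb[OF \<phi>c _ sn]) (use K' in auto)
      have mu: "\<mu> \<phi> = c * \<mu> one_fun" unfolding \<phi>_def by (rule lf_scale[OF lf one_cfun])
      have "ln (exp c * K') / real (1::nat) - \<mu> \<phi> < r"
      proof -
        have "c * (1 - \<mu> one_fun) = r - ln K' - 1" using one unfolding c_def by simp
        then show ?thesis unfolding mu using K' by (simp add: ln_mult algebra_simps)
      qed
      then show ?thesis using \<phi>c ereal_diff_lt[OF sb] by blast
    next
      case inv
      define d where "d = \<mu> (\<lambda>x. f (\<alpha> x)) - \<mu> f"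
      have d: "d \<noteq> 0" using inv(2) unfolding d_def by simp
      define t where "t = (ln K' + 2 - r) / d"
      define g :: "'a \<Rightarrow> real" where "g = (\<lambda>x. t * f x)"
      have fa: "(\<lambda>x. f (\<alpha> x)) \<in> cfun"
        using inv(1) assms(2) unfolding cfun_iff by (rule continuous_on_compose2[OF _ _ subset_UNIV])
      have gc: "g \<in> cfun" using inv(1) unfolding g_def by (auto simp: cfun_iff intro!: continuous_intros)
      have egc: "(\<lambda>x. exp (g x)) \<in> cfun" using gc by (auto simp: cfun_iff intro!: continuous_intros)
      define \<phi> where "\<phi> = (\<lambda>x. g (\<alpha> x) - g x)"
      have \<phi>_eq: "\<phi> = (\<lambda>x. (\<lambda>x. t * f (\<alpha> x)) x + (\<lambda>x. (-t) * f x) x)"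
        unfolding \<phi>_def g_def by auto
      have c1: "(\<lambda>x. t * f (\<alpha> x)) \<in> cfun" using fa by (auto simp: cfun_iff intro!: continuous_intros)
      have c2: "(\<lambda>x. (-t) * f x) \<in> cfun" using inv(1) by (auto simp: cfun_iff intro!: continuous_intros)
      have \<phi>c: "\<phi> \<in> cfun" unfolding \<phi>_eq using c1 c2 inv(1) by (auto simp: cfun_iff intro!: continuous_intros)
      have mu: "\<mu> \<phi> = t * d"
        unfolding \<phi>_eq lf_add[OF lf c1 c2] lf_scale[OF lf fa] lf_scale[OF lf inv(1)] d_def
        by (simp add: right_diff_distrib)
      have iter: "(weighted_op A \<phi> ^^ n) (\<lambda>x. exp (g x) * h x) = (\<lambda>x. exp (g x) * (A^^n) h x)"
        if hc: "h \<in> cfun" for n h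
      proof (induction n)
        case 0 show ?case by simp
      next
        case (Suc n)
        have Anh: "(A^^n) h \<in> cfun" by (rule plo_cfun[OF plo_pow[OF Apl] hc])
        have "(weighted_op A \<phi> ^^ Suc n) (\<lambda>x. exp (g x) * h x)
            = A (\<lambda>x. exp (\<phi> x) * (exp (g x) * (A^^n) h x))"
          by (simp only: funpow.simps(2) o_apply Suc.IH) (simp add: weighted_op_def)
        also have "(\<lambda>x. exp (\<phi> x) * (exp (g x) * (A^^n) h x)) = (\<lambda>x. (\<lambda>x. exp (g x)) (\<alpha> x) * (A^^n) h x)"
        proof (rule ext)
          fix x
          have "exp (\<phi> x) * exp (g x) = exp (g (\<alpha> x))" unfolding \<phi>_def by (simp add: exp_diff)
          then show "exp (\<phi> x) * (exp (g x) * (A^^n) h x) = (\<lambda>x. exp (g x)) (\<alpha> x) * (A^^n) h x"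
            by (metis mult.assoc)
        qed
        also have "A \<dots> = (\<lambda>x. exp (g x) * A ((A^^n) h) x)" by (rule tr[OF egc Anh])
        finally show ?case by simp
      qed
      define h :: "'a \<Rightarrow> real" where "h = (\<lambda>x. exp (- g x))"
      have hc: "h \<in> cfun" unfolding h_def using gc by (auto simp: cfun_iff intro!: continuous_intros)
      have one: "one_fun = (\<lambda>x. exp (g x) * h x)" unfolding h_def one_fun_def by (auto simp: exp_minus)
      define G where "G = supnorm g"
      have Gb: "\<bar>g x\<bar> \<le> G" for x unfolding G_def by (rule supnorm_ge[OF K gc])
      have G0: "G \<ge> 0" using Gb[of undefined] by linarith
      define n where "n = nat (ceiling (2*G)) + 1"
      have n1: "n \<ge> 1" unfolding n_def by simp
      have n2: "2 * G \<le> real n" unfolding n_def by linarith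
      define b where "b = exp G * exp G * K' ^ n"
      have bpos: "b > 0" unfolding b_def using K' by simp
      have "supnorm ((weighted_op A \<phi> ^^ n) one_fun) \<le> b"
      proof (rule supnorm_le)
        fix x
        have Anpl: "pos_linear_op (A^^n)" by (rule plo_pow[OF Apl])
        have eq: "(weighted_op A \<phi> ^^ n) one_fun x = exp (g x) * (A^^n) h x"
          unfolding one iter[OF hc] by simp
        have hle: "(A^^n) h x \<le> (A^^n) (\<lambda>x. exp G * one_fun x) x"
        proof (rule plo_mono[OF Anpl hc])
          show "(\<lambda>x. exp G * one_fun x) \<in> cfun" by (simp add: cfun_iff one_fun_def)
          fix y show "h y \<le> exp G * one_fun y" unfolding h_def one_fun_def using Gb[of y] by simp
        qed
        also have "\<dots> = exp G * (A^^n) one_fun x" by (simp add: plo_scale[OF Anpl one_cfun])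
        also have "\<dots> \<le> exp G * K' ^ n"
        proof -
          have "(A^^n) one_fun x \<le> supnorm ((A^^n) one_fun)"
            using supnorm_ge[OF K pow_cfun[OF Apl], of n x] by simp
          also have "\<dots> \<le> K1 ^ n" unfolding K1_def by (rule A_pow_bound[OF K Apl])
          also have "\<dots> \<le> K' ^ n" using K1 K' by (intro power_mono) auto
          finally show ?thesis by simp
        qed
        finally have hle2: "(A^^n) h x \<le> exp G * K' ^ n" .
        have h0: "(A^^n) h x \<ge> 0" by (rule plo_pos[OF Anpl hc]) (simp add: h_def)
        have eg: "exp (g x) \<le> exp G" using Gb[of x] by simp
        have "exp (g x) * (A^^n) h x \<le> exp G * (exp G * K' ^ n)"
          using eg hle2 h0 by (intro mult_mono) auto
        then show "\<bar>(weighted_op A \<phi> ^^ n) one_fun x\<bar> \<le> b"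
          unfolding eq b_def using h0 by (simp add: abs_mult)
      qed
      note sn = this
      have sb: "spec_exp A \<phi> \<le> ereal (ln b / real n)" by (rule specb[OF \<phi>c n1 sn bpos])
      have lnb: "ln b / real n \<le> ln K' + 1"
      proof -
        have "ln b = 2 * G + real n * ln K'" unfolding b_def using K' by (simp add: ln_mult ln_realpow)
        then have "ln b / real n = 2 * G / real n + ln K'" using n1 by (simp add: field_simps)
        moreover have "2 * G / real n \<le> 1" using n1 n2 by (simp add: divide_le_eq)
        ultimately show ?thesis by simp
      qed
      have "ln b / real n - \<mu> \<phi> < r"
      proof -
        have "t * d = ln K' + 2 - r" unfolding t_def using d by simp
        then show ?thesis unfolding mu using lnb by simp
      qed
      then show ?thesis using \<phi>c ereal_diff_lt[OF sb] by blast
    qed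
  qed
  define X where "X = (INF \<phi>\<in>cfun. spec_exp A \<phi> - ereal (\<mu> \<phi>))"
  have Xr: "X < ereal r" for r
  proof -
    obtain \<phi> where "\<phi> \<in> cfun" "spec_exp A \<phi> - ereal (\<mu> \<phi>) < ereal r" using main[of r] by blast
    moreover have "X \<le> spec_exp A \<phi> - ereal (\<mu> \<phi>)" unfolding X_def by (rule INF_lower) fact
    ultimately show ?thesis by simp
  qed
  have "X = -\<infinity>"
  proof (cases X)
    case (real s) then show ?thesis using Xr[of s] by simp
  next
    case PInf then show ?thesis using Xr[of 0] by simp
  qed simp
  then show ?thesis unfolding X_def .
qed

end
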